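(* Let $B_i=(\underline{a}_i,\overline{a}_i)\times(\underline{b}_i,\overline{b}_i)\subset\mathbb{R}^2$, $i=1,\dots,N$, be rectangles and $d$ a positive integer, $p=\binom{d+2}{2}$. Let $$V(B_1,\dots,B_N)=\{f\in\mathbb{Z}[x,y]\mid \mathrm{Zero}(f)\cap B_i\neq\emptyset \text{ for all } i=1,\dots,N\},$$ where $\mathrm{Zero}(f)=\{(x,y)\in\mathbb{R}^2\mid f(x,y)=0\}$. Define the polynomial function $D_d:\mathbb{R}^{2N}\to\mathbb{R}$ by $$D_d(x_1,y_1,\dots,x_N,y_N)=\det\Big(\sum_{i=1}^N \mathbf{v}_d(x_i,y_i)\mathbf{v}_d(x_i,y_i)^T\Big),$$ where $\mathbf{v}_d$ is the vector of all $p$ monomials in $x,y$ of total degree at most $d$. If $D_d>0$ at every point of $B_1\times B_2\times\cdots\times B_N\subset\mathbb{R}^{2N}$, then $$\min\{\deg f\mid f\in V(B_1,\dots,B_N),\ f\neq 0\}\ge d+1.$$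
   Context: $\mathbf{v}_d=[1,x,y,x^2,xy,y^2,\dots,x^d,\dots,y^d]^T$ and $\mathbf{v}_d(x_i,y_i)$ is its evaluation at $(x_i,y_i)$. "Positive definite on the box" in the paper means strictly positive at every point of the box. *)

theory Defs
  imports Main "HOL-Library.Poly_Mapping" "Jordan_Normal_Form.Determinant"
begin

text \<open>Bivariate integer polynomials f in Z[x,y]: finitely supported coefficient maps,
  lookup f (i,j) is the coefficient of x^i y^j.\<close>
type_synonym bipoly = "(nat \<times> nat) \<Rightarrow>\<^sub>0 int"

definition bipoly_eval :: "bipoly \<Rightarrow> real \<Rightarrow> real \<Rightarrow> real" where
  "bipoly_eval f x y = (\<Sum>(i,j)\<in>Poly_Mapping.keys f. of_int (Poly_Mapping.lookup f (i,j)) * x ^ i * y ^ j)"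

text \<open>Total degree (only meaningful for f \<noteq> 0).\<close>
definition total_degree :: "bipoly \<Rightarrow> nat" where
  "total_degree f = Max ((\<lambda>(i,j). i + j) ` Poly_Mapping.keys f)"

definition Zero_set :: "bipoly \<Rightarrow> (real \<times> real) set" where
  "Zero_set f = {(x,y). bipoly_eval f x y = 0}"

definition rect :: "real \<Rightarrow> real \<Rightarrow> real \<Rightarrow> real \<Rightarrow> (real \<times> real) set" where
  "rect alo ahi blo bhi = {(x,y). alo < x \<and> x < ahi \<and> blo < y \<and> y < bhi}"

text \<open>Exponents of the monomials of v_d in the order 1, x, y, x^2, xy, y^2, ..., x^d, ..., y^d.\<close>
definition mono_list :: "nat \<Rightarrow> (nat \<times> nat) list" where
  "mono_list d = concat (map (\<lambda>k. map (\<lambda>i. (i, k - i)) (rev [0..<Suc k])) [0..<Suc d])"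

definition vd :: "nat \<Rightarrow> real \<Rightarrow> real \<Rightarrow> real vec" where
  "vd d x y = vec (length (mono_list d)) (\<lambda>r. x ^ fst (mono_list d ! r) * y ^ snd (mono_list d ! r))"

definition Dd :: "nat \<Rightarrow> nat \<Rightarrow> (nat \<Rightarrow> real) \<Rightarrow> (nat \<Rightarrow> real) \<Rightarrow> real" where
  "Dd d N xs ys = det (mat (length (mono_list d)) (length (mono_list d))
      (\<lambda>(r,c). \<Sum>i<N. (vd d (xs i) (ys i)) $ r * (vd d (xs i) (ys i)) $ c))"

end

theory Submission
  imports Defs
begin

lemma mono_list_Suc:
  "mono_list (Suc d) = mono_list d @ map (\<lambda>i. (i, Suc d - i)) (rev [0..<Suc (Suc d)])"
  unfolding mono_list_def by simp

lemma set_mono_list: "set (mono_list d) = {(i,j). i + j \<le> d}"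
proof (induction d)
  case 0
  then show ?case by (auto simp: mono_list_def)
next
  case (Suc d)
  show ?case
  proof (rule Set.set_eqI)
    fix z :: "nat \<times> nat"
    obtain a b where z: "z = (a,b)" by force
    show "(z \<in> set (mono_list (Suc d))) = (z \<in> {(i,j). i + j \<le> Suc d})"
      unfolding mono_list_Suc z using Suc by (cases "a + b = Suc d") auto
  qed
qed

lemma distinct_mono_list: "distinct (mono_list d)"
proof (induction d)
  case 0
  then show ?case by (simp add: mono_list_def)
next
  case (Suc d)
  have inj: "inj_on (\<lambda>i. (i, Suc d - i)) (set (rev [0..<Suc (Suc d)]))"
    by (auto simp: inj_on_def)
  have "distinct (map (\<lambda>i. (i, Suc d - i)) (rev [0..<Suc (Suc d)]))"
    using inj by (simp add: distinct_map)
  moreover have "set (mono_list d) \<inter> set (map (\<lambda>i. (i, Suc d - i)) (rev [0..<Suc (Suc d)])) = {}"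
    by (auto simp: set_mono_list)
  ultimately show ?case using Suc unfolding mono_list_Suc by simp
qed

theorem corollary3:
  fixes N d :: nat
    and alo ahi blo bhi :: "nat \<Rightarrow> real"
  assumes "d \<ge> 1"
    and "\<forall>xs ys. (\<forall>i<N. (xs i, ys i) \<in> rect (alo i) (ahi i) (blo i) (bhi i))
                  \<longrightarrow> Dd d N xs ys > 0"
  shows "\<forall>f :: bipoly. f \<noteq> 0 \<and> (\<forall>i<N. Zero_set f \<inter> rect (alo i) (ahi i) (blo i) (bhi i) \<noteq> {})
            \<longrightarrow> total_degree f \<ge> d + 1"
proof (intro allI impI, rule ccontr)
  fix f :: bipoly
  assume H: "f \<noteq> 0 \<and> (\<forall>i<N. Zero_set f \<inter> rect (alo i) (ahi i) (blo i) (bhi i) \<noteq> {})"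
  assume "\<not> d + 1 \<le> total_degree f"
  hence deg: "total_degree f \<le> d" by simp
  let ?L = "mono_list d"
  let ?p = "length ?L"
  have fin: "finite (Poly_Mapping.keys f)" by simp
  have keys_sub: "Poly_Mapping.keys f \<subseteq> set ?L"
  proof
    fix k assume k: "k \<in> Poly_Mapping.keys f"
    obtain i j where kij: "k = (i,j)" by force
    have "i + j \<le> total_degree f"
      unfolding total_degree_def using k kij fin
      by (metis (mono_tags, lifting) Max_ge case_prod_conv finite_imageI image_eqI)
    thus "k \<in> set ?L" using deg kij by (simp add: set_mono_list)
  qed
  obtain xs ys where pts: "\<And>i. i < N \<Longrightarrow> (xs i, ys i) \<in> Zero_set f \<inter> rect (alo i) (ahi i) (blo i) (bhi i)"
  proof -
    have "\<forall>i. \<exists>q. i < N \<longrightarrow> q \<in> Zero_set f \<inter> rect (alo i) (ahi i) (blo i) (bhi i)"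
      using H by blast
    then obtain q where "\<And>i. i < N \<Longrightarrow> q i \<in> Zero_set f \<inter> rect (alo i) (ahi i) (blo i) (bhi i)"
      by metis
    thus ?thesis using that[of "\<lambda>i. fst (q i)" "\<lambda>i. snd (q i)"] by simp
  qed
  define c :: "real vec" where "c = vec ?p (\<lambda>r. of_int (Poly_Mapping.lookup f (?L ! r)))"
  have eval: "bipoly_eval f x y = (\<Sum>r<?p. vd d x y $ r * c $ r)" for x y
  proof -
    have "bipoly_eval f x y = (\<Sum>k\<in>Poly_Mapping.keys f. of_int (Poly_Mapping.lookup f k) * x ^ fst k * y ^ snd k)"
      unfolding bipoly_eval_def by (simp add: case_prod_beta)
    also have "\<dots> = (\<Sum>k\<in>set ?L. of_int (Poly_Mapping.lookup f k) * x ^ fst k * y ^ snd k)"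
      by (rule sum.mono_neutral_left) (use keys_sub in \<open>auto simp: in_keys_iff\<close>)
    also have "\<dots> = (\<Sum>r<?p. of_int (Poly_Mapping.lookup f (?L ! r)) * x ^ fst (?L ! r) * y ^ snd (?L ! r))"
      by (simp add: sum.distinct_set_conv_list[OF distinct_mono_list] sum_list_sum_nth lessThan_atLeast0)
    also have "\<dots> = (\<Sum>r<?p. vd d x y $ r * c $ r)"
      by (rule sum.cong) (auto simp: vd_def c_def)
    finally show ?thesis .
  qed
  have c_nz: "c \<noteq> 0\<^sub>v ?p"
  proof
    assume c0: "c = 0\<^sub>v ?p"
    obtain k where k: "k \<in> Poly_Mapping.keys f" using H by (metis all_not_in_conv keys_eq_empty)
    then obtain r where r: "r < ?p" "?L ! r = k" using keys_sub by (metis in_set_conv_nth subsetD)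
    have "c $ r = of_int (Poly_Mapping.lookup f k)" using r by (simp add: c_def)
    moreover have "c $ r = 0" using c0 r by simp
    ultimately show False using k by (simp add: in_keys_iff)
  qed
  define M :: "real mat" where "M = mat ?p ?p
      (\<lambda>(r,c). \<Sum>i<N. (vd d (xs i) (ys i)) $ r * (vd d (xs i) (ys i)) $ c)"
  have Mc: "M *\<^sub>v c = 0\<^sub>v ?p"
  proof (rule eq_vecI)
    fix r assume r: "r < dim_vec (0\<^sub>v ?p :: real vec)"
    hence r': "r < ?p" by simp
    have "(M *\<^sub>v c) $ r = (\<Sum>s<?p. (\<Sum>i<N. vd d (xs i) (ys i) $ r * vd d (xs i) (ys i) $ s) * c $ s)"
      using r' by (simp add: M_def mult_mat_vec_def scalar_prod_def c_def lessThan_atLeast0)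
    also have "\<dots> = (\<Sum>i<N. vd d (xs i) (ys i) $ r * (\<Sum>s<?p. vd d (xs i) (ys i) $ s * c $ s))"
      by (simp add: sum_distrib_left sum_distrib_right mult.assoc sum.swap[of _ "{..<N}"])
    also have "\<dots> = (\<Sum>i<N. vd d (xs i) (ys i) $ r * bipoly_eval f (xs i) (ys i))"
      by (simp add: eval)
    also have "\<dots> = 0"
      using pts by (auto simp: Zero_set_def intro!: sum.neutral)
    finally show "(M *\<^sub>v c) $ r = 0\<^sub>v ?p $ r" using r' by simp
  qed (simp add: M_def)
  have "det M = 0"
  proof -
    have Mcar: "M \<in> carrier_mat ?p ?p" by (simp add: M_def)
    have "c \<in> carrier_vec ?p" by (simp add: c_def)
    thus ?thesis using det_0_iff_vec_prod_zero[OF Mcar] c_nz Mc by blast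
  qed
  moreover have "Dd d N xs ys > 0"
    using assms(2) pts by blast
  ultimately show False by (simp add: Dd_def M_def)
qed

end
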